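(* Let $P, P' \subset \mathbb{R}^d$ be smooth $d$-dimensional prismatoids which are Minkowski equivalent, and whose tops and bottoms each lie in hyperplanes of the form $\{x \in \mathbb{R}^d : x_d = c\}$ with $c \in \mathbb{Z}$. Let $S_0,\dots,S_h$ be the slices of $P$ and $S'_0,\dots,S'_{h'}$ the slices of $P'$, and suppose that for all $l$ and $m$ the pair $(S_l, S'_m)$ is IDP. Then the pair $(P, P')$ is IDP.
   Context: A lattice polytope is the convex hull of finitely many points of $\mathbb{Z}^d$. A $d$-dimensional polytope is simple if each vertex lies in exactly $d$ edges; the primitive edge directions at a vertex are the smallest lattice vectors along its incident edges; a $d$-dimensional lattice polytope in $\mathbb{R}^d$ is smooth if it is simple and at every vertex the primitive edge directions form a basis of $\mathbb{Z}^d$. A $d$-dimensional prism is a polytope affinely equivalent to $Q \times [0,1]$ for some $(d-1)$-dimensional polytope $Q$, with top and bottom facets the images of $Q\times\{1\}$ and $Q\times\{0\}$. A prismatoid is a polytope whose face lattice is isomorphic to that of a prism and such that the facets corresponding to the top and bottom facets (its top and bottom) are parallel, i.e. the linear subspaces parallel to their affine hulls coincide. Two polytopes are Minkowski equivalent if they have the same normal fan. If a prismatoid $P$ has bottom in $\{x: x_d = b\}$ and top in $\{x : x_d = b+h\}$ with integers $b$, $h\ge 0$ (after naming top and bottom so that $h \geq 0$), its slices are $S_l = P \cap \{x : x_d = b+l\}$ for $l = 0,1,\dots,h$. For lattice polytopes $A,B$, the pair $(A,B)$ is IDP if every lattice point of $A+B$ is the sum of a lattice point of $A$ and a lattice point of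 $B$. *)

theory Defs
  imports "HOL-Analysis.Analysis"
begin

definition lattice :: "'a::euclidean_space set" where
  "lattice = {x. \<forall>b\<in>Basis. x \<bullet> b \<in> \<int>}"

definition lattice_polytope :: "'a::euclidean_space set \<Rightarrow> bool" where
  "lattice_polytope P \<longleftrightarrow> (\<exists>V. finite V \<and> V \<subseteq> lattice \<and> P = convex hull V)"

definition is_edge_of :: "'a::euclidean_space set \<Rightarrow> 'a set \<Rightarrow> bool" where
  "is_edge_of E P \<longleftrightarrow> E face_of P \<and> aff_dim E = 1"

definition is_vertex_of :: "'a::euclidean_space \<Rightarrow> 'a set \<Rightarrow> bool" where
  "is_vertex_of v P \<longleftrightarrow> v extreme_point_of P"

definition simple_polytope :: "'a::euclidean_space set \<Rightarrow> bool" where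
  "simple_polytope P \<longleftrightarrow> polytope P \<and> aff_dim P = DIM('a) \<and>
     (\<forall>v. is_vertex_of v P \<longrightarrow> card {E. is_edge_of E P \<and> v \<in> E} = DIM('a))"

definition primitive_edge_direction :: "'a::euclidean_space \<Rightarrow> 'a set \<Rightarrow> 'a \<Rightarrow> bool" where
  "primitive_edge_direction v E u \<longleftrightarrow>
     u \<in> lattice \<and> u \<noteq> 0 \<and> (\<exists>x\<in>E. x \<noteq> v \<and> (\<exists>t>0. x - v = t *\<^sub>R u)) \<and>
     (\<forall>s. 0 < s \<and> s < 1 \<longrightarrow> s *\<^sub>R u \<notin> lattice)"

definition primitive_edge_directions :: "'a::euclidean_space set \<Rightarrow> 'a \<Rightarrow> 'a set" where
  "primitive_edge_directions P v =
     {u. \<exists>E. is_edge_of E P \<and> v \<in> E \<and> primitive_edge_direction v E u}"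

definition lattice_basis :: "'a::euclidean_space set \<Rightarrow> bool" where
  "lattice_basis D \<longleftrightarrow> finite D \<and> card D = DIM('a) \<and> D \<subseteq> lattice \<and> independent D \<and>
     {\<Sum>u\<in>D. of_int (c u) *\<^sub>R u | c. True} = lattice"

definition smooth_polytope :: "'a::euclidean_space set \<Rightarrow> bool" where
  "smooth_polytope P \<longleftrightarrow> lattice_polytope P \<and> simple_polytope P \<and>
     (\<forall>v. is_vertex_of v P \<longrightarrow> lattice_basis (primitive_edge_directions P v))"

definition face_lattice_iso :: "('a::euclidean_space set \<Rightarrow> 'a set) \<Rightarrow> 'a set \<Rightarrow> 'a set \<Rightarrow> bool" where
  "face_lattice_iso f P R \<longleftrightarrow> bij_betw f {F. F face_of P} {G. G face_of R} \<and>
     (\<forall>F G. F face_of P \<longrightarrow> G face_of P \<longrightarrow> (F \<subseteq> G \<longleftrightarrow> f F \<subseteq> f G))"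

text \<open>The standard prism Q \<times> [0,1] over a (d-1)-polytope Q lying in the hyperplane x\<bullet>e = 0,
  realised as Q + [0,e]; its bottom is Q and its top is Q + e.\<close>
definition prism_over :: "'a::euclidean_space \<Rightarrow> 'a set \<Rightarrow> 'a set" where
  "prism_over e Q = {q + t *\<^sub>R e | q t. q \<in> Q \<and> 0 \<le> t \<and> t \<le> 1}"

definition prismatoid :: "'a::euclidean_space set \<Rightarrow> 'a set \<Rightarrow> 'a set \<Rightarrow> bool" where
  "prismatoid P T B \<longleftrightarrow> polytope P \<and>
     (\<exists>e Q f. e \<in> Basis \<and> polytope Q \<and> Q \<subseteq> {x. x \<bullet> e = 0} \<and>
        aff_dim Q = int DIM('a) - 1 \<and>
        face_lattice_iso f P (prism_over e Q) \<and>
        T face_of P \<and> B face_of P \<and>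
        f T = (\<lambda>q. q + e) ` Q \<and> f B = Q) \<and>
     affine_parallel (affine hull T) (affine hull B)"

definition normal_cone :: "'a::euclidean_space set \<Rightarrow> 'a set \<Rightarrow> 'a set" where
  "normal_cone P F = {u. \<forall>x\<in>F. \<forall>y\<in>P. u \<bullet> y \<le> u \<bullet> x}"

definition normal_fan :: "'a::euclidean_space set \<Rightarrow> 'a set set" where
  "normal_fan P = {normal_cone P F | F. F face_of P \<and> F \<noteq> {}}"

definition minkowski_equivalent :: "'a::euclidean_space set \<Rightarrow> 'a set \<Rightarrow> bool" where
  "minkowski_equivalent P P' \<longleftrightarrow> normal_fan P = normal_fan P'"

definition IDP_pair :: "'a::euclidean_space set \<Rightarrow> 'a set \<Rightarrow> bool" where
  "IDP_pair A B \<longleftrightarrow> (\<forall>z \<in> lattice \<inter> {x + y | x y. x \<in> A \<and> y \<in> B}.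
     \<exists>x \<in> A \<inter> lattice. \<exists>y \<in> B \<inter> lattice. z = x + y)"

text \<open>Slices of P with bottom at level b and top at level b+h (h \<ge> 0) in coordinate e:
  S_l = P \<inter> {x\<bullet>e = b + l}, l = 0..h.\<close>
definition slice :: "'a::euclidean_space \<Rightarrow> 'a set \<Rightarrow> int \<Rightarrow> 'a set" where
  "slice e P c = P \<inter> {x. x \<bullet> e = of_int c}"

end

theory Submission
  imports Defs
begin

lemma prism_compact_convex:
  fixes Q :: "'a::euclidean_space set"
  assumes "compact Q" "convex Q"
  shows "compact (prism_over e Q)" "convex (prism_over e Q)"
proof -
  have eq: "prism_over e Q = (\<lambda>z. fst z + snd z *\<^sub>R e) ` (Q \<times> {0..1::real})"
    unfolding prism_over_def by force
  show "compact (prism_over e Q)" unfolding eq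
    by (intro compact_continuous_image compact_Times assms(1) compact_Icc continuous_intros)
  show "convex (prism_over e Q)"
    unfolding convex_def
  proof (intro ballI allI impI)
    fix x y and u v :: real
    assume x: "x \<in> prism_over e Q" and y: "y \<in> prism_over e Q" and uv: "0 \<le> u" "0 \<le> v" "u + v = 1"
    obtain q1 t1 where 1: "x = q1 + t1 *\<^sub>R e" "q1 \<in> Q" "0 \<le> t1" "t1 \<le> 1"
      using x unfolding prism_over_def by blast
    obtain q2 t2 where 2: "y = q2 + t2 *\<^sub>R e" "q2 \<in> Q" "0 \<le> t2" "t2 \<le> 1"
      using y unfolding prism_over_def by blast
    have "u *\<^sub>R q1 + v *\<^sub>R q2 \<in> Q" using assms(2) 1 2 uv unfolding convex_def by blast
    moreover have "u *\<^sub>R x + v *\<^sub>R y = (u *\<^sub>R q1 + v *\<^sub>R q2) + (u * t1 + v * t2) *\<^sub>R e"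
      using 1 2 by (simp add: algebra_simps)
    moreover have "0 \<le> u * t1 + v * t2" using uv 1 2 by simp
    moreover have "u * t1 + v * t2 \<le> 1"
    proof -
      have "u * t1 + v * t2 \<le> u * 1 + v * 1"
        using uv 1 2 by (intro add_mono mult_left_mono) auto
      then show ?thesis using uv by simp
    qed
    ultimately show "u *\<^sub>R x + v *\<^sub>R y \<in> prism_over e Q"
      unfolding prism_over_def by blast
  qed
qed

lemma prism_extreme:
  fixes Q :: "'a::euclidean_space set"
  assumes "p extreme_point_of prism_over e Q" "e \<noteq> 0"
  shows "p \<in> Q \<or> p \<in> (\<lambda>q. q + e) ` Q"
proof -
  have pin: "p \<in> prism_over e Q" using assms(1) extreme_point_of_def by blast
  obtain q t where qt: "p = q + t *\<^sub>R e" "q \<in> Q" "0 \<le> t" "t \<le> 1"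
    using pin unfolding prism_over_def by blast
  show ?thesis
  proof (cases "t = 0 \<or> t = 1")
    case True then show ?thesis using qt by auto
  next
    case False
    then have t: "0 < t" "t < 1" using qt by auto
    have a: "q \<in> prism_over e Q" unfolding prism_over_def using qt(2) by force
    have b: "q + e \<in> prism_over e Q" unfolding prism_over_def using qt(2)
      by (smt (verit) mem_Collect_eq scaleR_one)
    have "p \<in> closed_segment q (q + e)"
      unfolding closed_segment_def using qt t
      by (intro CollectI exI[of _ t]) (simp add: algebra_simps)
    moreover have "p \<noteq> q" using qt t assms(2) by simp
    moreover have "p \<noteq> q + e"
    proof
      assume "p = q + e"
      then have "(1 - t) *\<^sub>R e = 0" using qt by (simp add: algebra_simps)
      then show False using t assms(2) by simp
    qed
    ultimately have "p \<in> open_segment q (q + e)" unfolding open_segment_def by blast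
    then show ?thesis using assms(1) a b unfolding extreme_point_of_def by blast
  qed
qed

lemma prismatoid_hull:
  fixes P T B :: "'a::euclidean_space set"
  assumes "prismatoid P T B"
  shows "P = convex hull (B \<union> T)"
proof -
  obtain e Q f where e: "e \<in> Basis" and Qp: "polytope Q" and iso: "face_lattice_iso f P (prism_over e Q)"
    and TF: "T face_of P" and BF: "B face_of P" and fT: "f T = (\<lambda>q. q + e) ` Q" and fB: "f B = Q"
    and Pp: "polytope P"
    using assms unfolding prismatoid_def by blast
  define R where "R = prism_over e Q"
  have cR: "compact R" "convex R" unfolding R_def
    using prism_compact_convex polytope_imp_compact polytope_imp_convex Qp by blast+
  have bij: "bij_betw f {F. F face_of P} {G. G face_of R}"
    and ord: "\<And>F G. F face_of P \<Longrightarrow> G face_of P \<Longrightarrow> (F \<subseteq> G \<longleftrightarrow> f F \<subseteq> f G)"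
    using iso unfolding face_lattice_iso_def R_def by blast+
  have surj: "\<And>G. G face_of R \<Longrightarrow> \<exists>F. F face_of P \<and> f F = G"
    using bij unfolding bij_betw_def by (metis (mono_tags, lifting) imageE mem_Collect_eq)
  have fin: "\<And>F. F face_of P \<Longrightarrow> f F face_of R"
    using bij unfolding bij_betw_def by blast
  have inj: "\<And>F G. F face_of P \<Longrightarrow> G face_of P \<Longrightarrow> f F = f G \<Longrightarrow> F = G"
    using bij unfolding bij_betw_def inj_on_def by blast
  have f0: "f {} = {}"
  proof -
    obtain G where G: "G face_of P" "f G = {}" using surj[of "{}"] by blast
    have "f {} \<subseteq> f G" using ord[of "{}" G] G by simp
    then show ?thesis using G by simp
  qed
  have ext: "v \<in> B \<union> T" if v: "v extreme_point_of P" for v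
  proof -
    have vF: "{v} face_of P" using v face_of_singleton by blast
    have F'F: "f {v} face_of R" using fin[OF vF] .
    have ne: "f {v} \<noteq> {}" using inj[OF vF empty_face_of] f0 by auto
    have cF': "compact (f {v})" "convex (f {v})"
      using face_of_imp_compact[OF cR(2) cR(1) F'F] face_of_imp_convex[OF F'F] by auto
    obtain p where p: "p extreme_point_of (f {v})"
      using extreme_point_exists_convex[OF cF' ne] by blast
    have pR: "p extreme_point_of R" and pin: "p \<in> f {v}"
      using extreme_point_of_face[OF F'F] p by auto
    have pF: "{p} face_of R" using pR face_of_singleton by blast
    obtain G where G: "G face_of P" "f G = {p}" using surj[OF pF] by blast
    have "G \<subseteq> {v}" using ord[OF G(1) vF] G pin by auto
    moreover have "G \<noteq> {}" using G f0 by auto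
    ultimately have Gv: "G = {v}" by auto
    have "e \<noteq> 0" using e by auto
    then have "p \<in> Q \<or> p \<in> (\<lambda>q. q + e) ` Q" using prism_extreme pR unfolding R_def by blast
    then have "{p} \<subseteq> f B \<or> {p} \<subseteq> f T" using fB fT by auto
    then have "{v} \<subseteq> B \<or> {v} \<subseteq> T" using ord[OF vF BF] ord[OF vF TF] G Gv by auto
    then show ?thesis by auto
  qed
  have cP: "compact P" "convex P" using Pp polytope_imp_compact polytope_imp_convex by auto
  have "P = convex hull {x. x extreme_point_of P}" using Krein_Milman_Minkowski[OF cP] .
  also have "\<dots> \<subseteq> convex hull (B \<union> T)" using ext by (intro hull_mono) auto
  finally have 1: "P \<subseteq> convex hull (B \<union> T)" .
  have "B \<union> T \<subseteq> P" using BF TF face_of_imp_subset by blast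
  then have "convex hull (B \<union> T) \<subseteq> P" using cP(2) by (simp add: hull_minimal)
  with 1 show ?thesis by blast
qed

lemma decomp:
  fixes B T :: "'a::euclidean_space set"
  assumes x: "x \<in> convex hull (B \<union> T)" and cB: "convex B" and cT: "convex T"
    and ne: "B \<noteq> {}" "T \<noteq> {}"
    and Bl: "B \<subseteq> {x. x \<bullet> e = b}" and Tl: "T \<subseteq> {x. x \<bullet> e = c}" and bc: "b < c"
  shows "\<exists>\<beta>\<in>B. \<exists>\<tau>\<in>T. x = (1 - (x \<bullet> e - b) / (c - b)) *\<^sub>R \<beta> + ((x \<bullet> e - b) / (c - b)) *\<^sub>R \<tau>"
    and "b \<le> x \<bullet> e" and "x \<bullet> e \<le> c"
proof -
  obtain u v s t where uv: "x = u *\<^sub>R s + v *\<^sub>R t" "u \<ge> 0" "v \<ge> 0" "u + v = 1" "s \<in> B" "t \<in> T"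
    using x convex_hull_union_two[OF cB ne(1) cT ne(2)] by blast
  have se: "s \<bullet> e = b" and te: "t \<bullet> e = c" using uv Bl Tl by auto
  have xe: "x \<bullet> e = u * b + v * c" using uv se te by (simp add: inner_add_left)
  have u1: "u = 1 - v" using uv(4) by simp
  have hv: "x \<bullet> e - b = v * (c - b)" using xe u1 by (simp add: algebra_simps)
  then have v: "v = (x \<bullet> e - b) / (c - b)" using bc by (simp add: field_simps)
  have u: "u = 1 - (x \<bullet> e - b) / (c - b)" using v uv(4) by simp
  show "\<exists>\<beta>\<in>B. \<exists>\<tau>\<in>T. x = (1 - (x \<bullet> e - b) / (c - b)) *\<^sub>R \<beta> + ((x \<bullet> e - b) / (c - b)) *\<^sub>R \<tau>"
  proof (intro bexI)
    show "x = (1 - (x \<bullet> e - b) / (c - b)) *\<^sub>R s + ((x \<bullet> e - b) / (c - b)) *\<^sub>R t"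
      using uv(1) u v by simp
  qed (use uv in auto)
  have "0 \<le> v * (c - b)" using uv bc by simp
  then show "b \<le> x \<bullet> e" using hv by simp
  have "0 \<le> u * (c - b)" using uv bc by simp
  then show "x \<bullet> e \<le> c" using hv u1 by (simp add: algebra_simps)
qed

lemma comb_in:
  fixes B T :: "'a::euclidean_space set"
  assumes "\<beta> \<in> B" "\<tau> \<in> T" "0 \<le> \<theta>" "\<theta> \<le> 1"
  shows "(1 - \<theta>) *\<^sub>R \<beta> + \<theta> *\<^sub>R \<tau> \<in> convex hull (B \<union> T)"
proof -
  have "\<beta> \<in> convex hull (B \<union> T)" "\<tau> \<in> convex hull (B \<union> T)"
    using assms(1,2) hull_subset[of "B \<union> T" convex] by auto
  then show ?thesis using assms by (intro convexD convex_convex_hull) auto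
qed

lemma comb_level:
  assumes "\<beta> \<bullet> e = b" "\<tau> \<bullet> e = c"
  shows "((1 - \<theta>) *\<^sub>R \<beta> + \<theta> *\<^sub>R \<tau>) \<bullet> e = b + \<theta> * (c - b)"
  proof -
  have "((1 - \<theta>) *\<^sub>R \<beta> + \<theta> *\<^sub>R \<tau>) \<bullet> e = (1 - \<theta>) * b + \<theta> * c"
    using assms by (simp add: inner_add_left)
  also have "\<dots> = b + \<theta> * (c - b)" by (simp add: algebra_simps)
  finally show ?thesis .
qed

lemma M_level:
  fixes B T P :: "'a::euclidean_space set"
  assumes P: "P = convex hull (B \<union> T)" and Bl: "B \<subseteq> {x. x \<bullet> e = b}" and Tl: "T \<subseteq> {x. x \<bullet> e = c}"
    and bu: "\<beta>u \<in> B" "\<forall>y\<in>B. u \<bullet> y \<le> u \<bullet> \<beta>u" and tu: "\<tau>u \<in> T" "\<forall>y\<in>T. u \<bullet> y \<le> u \<bullet> \<tau>u"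
  shows "(\<exists>x\<in>B. \<forall>y\<in>P. (u + t *\<^sub>R e) \<bullet> y \<le> (u + t *\<^sub>R e) \<bullet> x) \<longleftrightarrow> u \<bullet> \<tau>u + t * (c - b) \<le> u \<bullet> \<beta>u"
proof
  assume "\<exists>x\<in>B. \<forall>y\<in>P. (u + t *\<^sub>R e) \<bullet> y \<le> (u + t *\<^sub>R e) \<bullet> x"
  then obtain x where x: "x \<in> B" "\<forall>y\<in>P. (u + t *\<^sub>R e) \<bullet> y \<le> (u + t *\<^sub>R e) \<bullet> x" by blast
  have "\<tau>u \<in> P" using P tu(1) hull_subset[of "B \<union> T" convex] by auto
  then have "(u + t *\<^sub>R e) \<bullet> \<tau>u \<le> (u + t *\<^sub>R e) \<bullet> x" using x by blast
  moreover have "e \<bullet> \<tau>u = c" "e \<bullet> x = b" using tu Bl Tl x by (auto simp: inner_commute)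
  ultimately have "u \<bullet> \<tau>u + t * c \<le> u \<bullet> x + t * b"
    by (simp add: inner_add_left)
  moreover have "u \<bullet> x \<le> u \<bullet> \<beta>u" using bu x by blast
  ultimately show "u \<bullet> \<tau>u + t * (c - b) \<le> u \<bullet> \<beta>u" by (simp add: algebra_simps)
next
  assume H: "u \<bullet> \<tau>u + t * (c - b) \<le> u \<bullet> \<beta>u"
  have "B \<union> T \<subseteq> {y. (u + t *\<^sub>R e) \<bullet> y \<le> (u + t *\<^sub>R e) \<bullet> \<beta>u}"
  proof
    fix y assume y: "y \<in> B \<union> T"
    have be: "e \<bullet> \<beta>u = b" using bu Bl by (auto simp: inner_commute)
    show "y \<in> {y. (u + t *\<^sub>R e) \<bullet> y \<le> (u + t *\<^sub>R e) \<bullet> \<beta>u}"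
    proof (cases "y \<in> B")
      case True
      then have "e \<bullet> y = b" "u \<bullet> y \<le> u \<bullet> \<beta>u" using Bl bu by (auto simp: inner_commute)
      then show ?thesis using be by (simp add: inner_add_left)
    next
      case False
      then have "y \<in> T" using y by blast
      then have "e \<bullet> y = c" "u \<bullet> y \<le> u \<bullet> \<tau>u" using Tl tu by (auto simp: inner_commute)
      then show ?thesis using be H by (simp add: inner_add_left algebra_simps)
    qed
  qed
  then have "P \<subseteq> {y. (u + t *\<^sub>R e) \<bullet> y \<le> (u + t *\<^sub>R e) \<bullet> \<beta>u}"
    unfolding P by (intro hull_minimal convex_halfspace_le)
  then show "\<exists>x\<in>B. \<forall>y\<in>P. (u + t *\<^sub>R e) \<bullet> y \<le> (u + t *\<^sub>R e) \<bullet> x" using bu by blast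
qed

lemma M_fan:
  fixes B T P :: "'a::euclidean_space set"
  assumes P: "P = convex hull (B \<union> T)" and BF: "B face_of P" and cB: "convex B" and cT: "convex T"
    and ne: "B \<noteq> {}" "T \<noteq> {}"
    and Bl: "B \<subseteq> {x. x \<bullet> e = b}" and Tl: "T \<subseteq> {x. x \<bullet> e = c}" and bc: "b < c"
  shows "(\<exists>x\<in>B. \<forall>y\<in>P. w \<bullet> y \<le> w \<bullet> x) \<longleftrightarrow> (\<exists>C\<in>normal_fan P. -e \<in> C \<and> w \<in> C)"
proof
  assume "\<exists>x\<in>B. \<forall>y\<in>P. w \<bullet> y \<le> w \<bullet> x"
  then obtain x where x: "x \<in> B" "\<forall>y\<in>P. w \<bullet> y \<le> w \<bullet> x" by blast
  have BP: "B \<subseteq> P" using face_of_imp_subset[OF BF] .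
  define F where "F = B \<inter> {y. w \<bullet> y = w \<bullet> x}"
  have "F face_of B" unfolding F_def
    using x BP by (intro face_of_Int_supporting_hyperplane_le cB) auto
  then have FF: "F face_of P" using face_of_trans[OF _ BF] by blast
  have Fne: "F \<noteq> {}" using x unfolding F_def by auto
  have "w \<in> normal_cone P F" unfolding normal_cone_def F_def using x by auto
  moreover have "-e \<in> normal_cone P F"
    unfolding normal_cone_def
  proof (intro CollectI ballI)
    fix z y assume z: "z \<in> F" and y: "y \<in> P"
    have "z \<bullet> e = b" using z Bl unfolding F_def by auto
    moreover have "b \<le> y \<bullet> e" using decomp(2)[OF y[unfolded P] cB cT ne Bl Tl bc] .
    ultimately show "-e \<bullet> y \<le> -e \<bullet> z" by (simp add: inner_commute)
  qed
  ultimately show "\<exists>C\<in>normal_fan P. -e \<in> C \<and> w \<in> C"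
    unfolding normal_fan_def using FF Fne by blast
next
  assume "\<exists>C\<in>normal_fan P. -e \<in> C \<and> w \<in> C"
  then obtain F where F: "F face_of P" "F \<noteq> {}" "-e \<in> normal_cone P F" "w \<in> normal_cone P F"
    unfolding normal_fan_def by blast
  obtain x where xF: "x \<in> F" using F by blast
  have xP: "x \<in> P" using xF face_of_imp_subset[OF F(1)] by auto
  obtain \<beta>0 where b0: "\<beta>0 \<in> B" using ne by blast
  have "\<beta>0 \<in> P" using b0 face_of_imp_subset[OF BF] by auto
  then have "-e \<bullet> \<beta>0 \<le> -e \<bullet> x" using F(3) xF unfolding normal_cone_def by blast
  moreover have "\<beta>0 \<bullet> e = b" using b0 Bl by auto
  ultimately have "x \<bullet> e \<le> b" by (simp add: inner_commute)
  moreover have "b \<le> x \<bullet> e" using decomp(2)[OF xP[unfolded P] cB cT ne Bl Tl bc] .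
  ultimately have xe: "x \<bullet> e = b" by simp
  obtain \<beta> \<tau> where bt: "\<beta> \<in> B" "\<tau> \<in> T" "x = (1 - (x \<bullet> e - b) / (c - b)) *\<^sub>R \<beta> + ((x \<bullet> e - b) / (c - b)) *\<^sub>R \<tau>"
    using decomp(1)[OF xP[unfolded P] cB cT ne Bl Tl bc] by blast
  have "x = \<beta>" using bt(3) xe by simp
  then have xB: "x \<in> B" using bt by simp
  have "\<forall>y\<in>P. w \<bullet> y \<le> w \<bullet> x" using F(4) xF unfolding normal_cone_def by blast
  then show "\<exists>x\<in>B. \<forall>y\<in>P. w \<bullet> y \<le> w \<bullet> x" using xB by blast
qed

lemma key:
  fixes P B T P' B' T' :: "'a::euclidean_space set"
  assumes P: "P = convex hull (B \<union> T)" and BF: "B face_of P" and cB: "convex B" and cT: "convex T"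
    and ne: "B \<noteq> {}" "T \<noteq> {}"
    and Bl: "B \<subseteq> {x. x \<bullet> e = b}" and Tl: "T \<subseteq> {x. x \<bullet> e = c}" and bc: "b < c"
  assumes P': "P' = convex hull (B' \<union> T')" and BF': "B' face_of P'" and cB': "convex B'" and cT': "convex T'"
    and ne': "B' \<noteq> {}" "T' \<noteq> {}"
    and Bl': "B' \<subseteq> {x. x \<bullet> e = b'}" and Tl': "T' \<subseteq> {x. x \<bullet> e = c'}" and bc': "b' < c'"
  assumes fan: "normal_fan P = normal_fan P'"
    and bu: "\<beta>u \<in> B" "\<forall>y\<in>B. u \<bullet> y \<le> u \<bullet> \<beta>u" and tu: "\<tau>u \<in> T" "\<forall>y\<in>T. u \<bullet> y \<le> u \<bullet> \<tau>u"
    and bu': "\<beta>u' \<in> B'" "\<forall>y\<in>B'. u \<bullet> y \<le> u \<bullet> \<beta>u'" and tu': "\<tau>u' \<in> T'" "\<forall>y\<in>T'. u \<bullet> y \<le> u \<bullet> \<tau>u'"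
  shows "(u \<bullet> \<tau>u - u \<bullet> \<beta>u) / (c - b) = (u \<bullet> \<tau>u' - u \<bullet> \<beta>u') / (c' - b')"
proof -
  have eqv: "(u \<bullet> \<tau>u + t * (c - b) \<le> u \<bullet> \<beta>u) \<longleftrightarrow> (u \<bullet> \<tau>u' + t * (c' - b') \<le> u \<bullet> \<beta>u')" for t
  proof -
    have "(u \<bullet> \<tau>u + t * (c - b) \<le> u \<bullet> \<beta>u) \<longleftrightarrow> (\<exists>x\<in>B. \<forall>y\<in>P. (u + t *\<^sub>R e) \<bullet> y \<le> (u + t *\<^sub>R e) \<bullet> x)"
      by (rule M_level[OF P Bl Tl bu tu, symmetric])
    also have "\<dots> \<longleftrightarrow> (\<exists>C\<in>normal_fan P. -e \<in> C \<and> (u + t *\<^sub>R e) \<in> C)"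
      by (rule M_fan[OF P BF cB cT ne Bl Tl bc])
    also have "\<dots> \<longleftrightarrow> (\<exists>C\<in>normal_fan P'. -e \<in> C \<and> (u + t *\<^sub>R e) \<in> C)"
      using fan by simp
    also have "\<dots> \<longleftrightarrow> (\<exists>x\<in>B'. \<forall>y\<in>P'. (u + t *\<^sub>R e) \<bullet> y \<le> (u + t *\<^sub>R e) \<bullet> x)"
      by (rule M_fan[OF P' BF' cB' cT' ne' Bl' Tl' bc', symmetric])
    also have "\<dots> \<longleftrightarrow> (u \<bullet> \<tau>u' + t * (c' - b') \<le> u \<bullet> \<beta>u')"
      by (rule M_level[OF P' Bl' Tl' bu' tu'])
    finally show ?thesis .
  qed
  define D where "D = u \<bullet> \<beta>u - u \<bullet> \<tau>u"
  define D' where "D' = u \<bullet> \<beta>u' - u \<bullet> \<tau>u'"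
  have h: "c - b > 0" "c' - b' > 0" using bc bc' by auto
  have "u \<bullet> \<tau>u + (D / (c - b)) * (c - b) \<le> u \<bullet> \<beta>u" using h by (simp add: D_def)
  then have "u \<bullet> \<tau>u' + (D / (c - b)) * (c' - b') \<le> u \<bullet> \<beta>u'" using eqv by blast
  then have "(D / (c - b)) * (c' - b') \<le> D'" unfolding D'_def by simp
  then have 1: "D / (c - b) \<le> D' / (c' - b')" using h by (simp add: pos_le_divide_eq)
  have "u \<bullet> \<tau>u' + (D' / (c' - b')) * (c' - b') \<le> u \<bullet> \<beta>u'" using h by (simp add: D'_def)
  then have "u \<bullet> \<tau>u + (D' / (c' - b')) * (c - b) \<le> u \<bullet> \<beta>u" using eqv by blast
  then have "(D' / (c' - b')) * (c - b) \<le> D" unfolding D_def by simp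
  then have 2: "D' / (c' - b') \<le> D / (c - b)" using h by (simp add: pos_le_divide_eq)
  have 3: "D / (c - b) = D' / (c' - b')" using 1 2 by simp
  have e1: "u \<bullet> \<tau>u - u \<bullet> \<beta>u = - D" and e2: "u \<bullet> \<tau>u' - u \<bullet> \<beta>u' = - D'"
    by (simp_all add: D_def D'_def)
  show ?thesis unfolding e1 e2 using 3 by (metis minus_divide_left)
qed

lemma comb_le:
  fixes u \<beta> \<tau> :: "'a::euclidean_space"
  assumes "0 \<le> \<theta>" "\<theta> \<le> 1" "u \<bullet> \<beta> \<le> Bu" "u \<bullet> \<tau> \<le> Tu"
  shows "u \<bullet> ((1 - \<theta>) *\<^sub>R \<beta> + \<theta> *\<^sub>R \<tau>) \<le> Bu + \<theta> * (Tu - Bu)"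
proof -
  have "u \<bullet> ((1 - \<theta>) *\<^sub>R \<beta> + \<theta> *\<^sub>R \<tau>) = (1 - \<theta>) * (u \<bullet> \<beta>) + \<theta> * (u \<bullet> \<tau>)"
    by (simp add: inner_add_right)
  also have "\<dots> \<le> (1 - \<theta>) * Bu + \<theta> * Tu"
    using assms by (intro add_mono mult_left_mono) auto
  also have "\<dots> = Bu + \<theta> * (Tu - Bu)" by (simp add: algebra_simps)
  finally show ?thesis .
qed

lemma comb_val:
  fixes u \<beta> \<tau> :: "'a::euclidean_space"
  shows "u \<bullet> ((1 - \<theta>) *\<^sub>R \<beta> + \<theta> *\<^sub>R \<tau>) = u \<bullet> \<beta> + \<theta> * (u \<bullet> \<tau> - u \<bullet> \<beta>)"
  by (simp add: inner_add_right algebra_simps)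

lemma hyp_comm: "{x. x \<bullet> e = r} = {x. e \<bullet> x = r}"
  by (simp add: inner_commute)

lemma max_exists:
  fixes B :: "'a::euclidean_space set"
  assumes "compact B" "B \<noteq> {}"
  obtains x where "x \<in> B" "\<forall>y\<in>B. u \<bullet> y \<le> u \<bullet> x"
proof -
  have "continuous_on B (\<lambda>x. u \<bullet> x)" by (intro continuous_intros)
  then show ?thesis using continuous_attains_sup[OF assms] that by blast
qed

lemma cont:
  fixes P B T P' B' T' :: "'a::euclidean_space set"
  assumes P: "P = convex hull (B \<union> T)" and BF: "B face_of P" and cB: "convex B" and cT: "convex T"
    and ne: "B \<noteq> {}" "T \<noteq> {}"
    and Bl: "B \<subseteq> {x. x \<bullet> e = b}" and Tl: "T \<subseteq> {x. x \<bullet> e = c}" and bc: "b < c"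
    and kB: "compact B" and kT: "compact T"
  assumes P': "P' = convex hull (B' \<union> T')" and BF': "B' face_of P'" and cB': "convex B'" and cT': "convex T'"
    and ne': "B' \<noteq> {}" "T' \<noteq> {}"
    and Bl': "B' \<subseteq> {x. x \<bullet> e = b'}" and Tl': "T' \<subseteq> {x. x \<bullet> e = c'}" and bc': "b' < c'"
    and kB': "compact B'" and kT': "compact T'"
  assumes fan: "normal_fan P = normal_fan P'"
    and a: "a \<in> P" "a \<bullet> e = lam" "b + 1 \<le> lam"
    and a': "a' \<in> P'" "a' \<bullet> e = mu" "mu + 1 \<le> c'"
  shows "a + a' \<in> {x + y | x y. x \<in> P \<inter> {x. x \<bullet> e = lam - 1} \<and> y \<in> P' \<inter> {x. x \<bullet> e = mu + 1}}"
proof (rule ccontr)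
  define S1 where "S1 = P \<inter> {x. x \<bullet> e = lam - 1}"
  define S2 where "S2 = P' \<inter> {x. x \<bullet> e = mu + 1}"
  define C where "C = {x + y | x y. x \<in> S1 \<and> y \<in> S2}"
  assume "a + a' \<notin> {x + y | x y. x \<in> P \<inter> {x. x \<bullet> e = lam - 1} \<and> y \<in> P' \<inter> {x. x \<bullet> e = mu + 1}}"
  then have nC: "a + a' \<notin> C" unfolding C_def S1_def S2_def .
  have kP: "compact P" "compact P'" unfolding P P'
    using kB kT kB' kT' by (simp_all add: compact_convex_hull compact_Un)
  have cvP: "convex P" "convex P'" unfolding P P' by simp_all
  have kS: "compact S1" "compact S2" unfolding S1_def S2_def hyp_comm
    using kP by (simp_all add: compact_Int_closed closed_hyperplane)
  have cS: "convex S1" "convex S2" unfolding S1_def S2_def hyp_comm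
    using cvP by (simp_all add: convex_Int convex_hyperplane)
  have "C = (\<Union>x\<in>S1. \<Union>y\<in>S2. {x + y})" unfolding C_def by auto
  then have cC: "convex C" using convex_sums[OF cS] by simp
  have "compact C" unfolding C_def using compact_sums[OF kS] .
  then have clC: "closed C" by (rule compact_imp_closed)
  obtain w r where wr: "w \<bullet> (a + a') < r" "\<forall>x\<in>C. r < w \<bullet> x"
    using separating_hyperplane_closed_point[OF cC clC nC] by blast
  define u where "u = - w"
  obtain \<beta>u where bu: "\<beta>u \<in> B" "\<forall>y\<in>B. u \<bullet> y \<le> u \<bullet> \<beta>u" using max_exists[OF kB ne(1)] by blast
  obtain \<tau>u where tu: "\<tau>u \<in> T" "\<forall>y\<in>T. u \<bullet> y \<le> u \<bullet> \<tau>u" using max_exists[OF kT ne(2)] by blast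
  obtain \<beta>u' where bu': "\<beta>u' \<in> B'" "\<forall>y\<in>B'. u \<bullet> y \<le> u \<bullet> \<beta>u'" using max_exists[OF kB' ne'(1)] by blast
  obtain \<tau>u' where tu': "\<tau>u' \<in> T'" "\<forall>y\<in>T'. u \<bullet> y \<le> u \<bullet> \<tau>u'" using max_exists[OF kT' ne'(2)] by blast
  define K where "K = (u \<bullet> \<tau>u - u \<bullet> \<beta>u) / (c - b)"
  have K': "K = (u \<bullet> \<tau>u' - u \<bullet> \<beta>u') / (c' - b')"
    unfolding K_def by (rule key[OF P BF cB cT ne Bl Tl bc P' BF' cB' cT' ne' Bl' Tl' bc' fan bu tu bu' tu'])
  have h: "c - b > 0" "c' - b' > 0" using bc bc' by auto
  have aP: "a \<in> convex hull (B \<union> T)" and aP': "a' \<in> convex hull (B' \<union> T')" using a a' P P' by auto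
  have la: "b \<le> lam" "lam \<le> c" using decomp(2,3)[OF aP cB cT ne Bl Tl bc] a by auto
  have ma: "b' \<le> mu" "mu \<le> c'" using decomp(2,3)[OF aP' cB' cT' ne' Bl' Tl' bc'] a' by auto
  obtain \<beta> \<tau> where bt: "\<beta> \<in> B" "\<tau> \<in> T" "a = (1 - (lam - b) / (c - b)) *\<^sub>R \<beta> + ((lam - b) / (c - b)) *\<^sub>R \<tau>"
    using decomp(1)[OF aP cB cT ne Bl Tl bc] a by auto
  obtain \<beta>' \<tau>' where bt': "\<beta>' \<in> B'" "\<tau>' \<in> T'" "a' = (1 - (mu - b') / (c' - b')) *\<^sub>R \<beta>' + ((mu - b') / (c' - b')) *\<^sub>R \<tau>'"
    using decomp(1)[OF aP' cB' cT' ne' Bl' Tl' bc'] a' by auto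
  have ua: "u \<bullet> a \<le> u \<bullet> \<beta>u + (lam - b) * K"
  proof -
    have "u \<bullet> a \<le> u \<bullet> \<beta>u + ((lam - b) / (c - b)) * (u \<bullet> \<tau>u - u \<bullet> \<beta>u)"
      unfolding bt(3) using la h bu tu bt by (intro comb_le) auto
    then show ?thesis unfolding K_def by simp
  qed
  have ua': "u \<bullet> a' \<le> u \<bullet> \<beta>u' + (mu - b') * K"
  proof -
    have "u \<bullet> a' \<le> u \<bullet> \<beta>u' + ((mu - b') / (c' - b')) * (u \<bullet> \<tau>u' - u \<bullet> \<beta>u')"
      unfolding bt'(3) using ma h bu' tu' bt' by (intro comb_le) auto
    then show ?thesis unfolding K' by simp
  qed
  define \<theta>1 where "\<theta>1 = (lam - 1 - b) / (c - b)"
  define \<theta>2 where "\<theta>2 = (mu + 1 - b') / (c' - b')"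
  have t1: "0 \<le> \<theta>1" "\<theta>1 \<le> 1" unfolding \<theta>1_def using a la h by (auto simp: field_simps)
  have t2: "0 \<le> \<theta>2" "\<theta>2 \<le> 1" unfolding \<theta>2_def using a' ma h by (auto simp: field_simps)
  define c1 where "c1 = (1 - \<theta>1) *\<^sub>R \<beta>u + \<theta>1 *\<^sub>R \<tau>u"
  define c2 where "c2 = (1 - \<theta>2) *\<^sub>R \<beta>u' + \<theta>2 *\<^sub>R \<tau>u'"
  have c1P: "c1 \<in> P" unfolding c1_def P using comb_in[OF bu(1) tu(1) t1] .
  have c2P: "c2 \<in> P'" unfolding c2_def P' using comb_in[OF bu'(1) tu'(1) t2] .
  have c1e: "c1 \<bullet> e = lam - 1"
  proof -
    have "c1 \<bullet> e = b + \<theta>1 * (c - b)" unfolding c1_def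
      by (rule comb_level) (use bu tu Bl Tl in auto)
    then show ?thesis unfolding \<theta>1_def using h by simp
  qed
  have c2e: "c2 \<bullet> e = mu + 1"
  proof -
    have "c2 \<bullet> e = b' + \<theta>2 * (c' - b')" unfolding c2_def
      by (rule comb_level) (use bu' tu' Bl' Tl' in auto)
    then show ?thesis unfolding \<theta>2_def using h by simp
  qed
  have "c1 + c2 \<in> C" unfolding C_def S1_def S2_def using c1P c2P c1e c2e by blast
  then have "r < w \<bullet> (c1 + c2)" using wr by blast
  then have lt: "u \<bullet> (c1 + c2) < u \<bullet> (a + a')" using wr(1) unfolding u_def by simp
  have v1: "u \<bullet> c1 = u \<bullet> \<beta>u + (lam - 1 - b) * K"
    unfolding c1_def comb_val K_def \<theta>1_def by simp
  have v2: "u \<bullet> c2 = u \<bullet> \<beta>u' + (mu + 1 - b') * K"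
    unfolding c2_def comb_val K' \<theta>2_def by simp
  have "u \<bullet> (a + a') \<le> u \<bullet> (c1 + c2)"
    using ua ua' v1 v2 by (simp add: inner_add_right algebra_simps)
  then show False using lt by simp
qed

lemma nondeg:
  fixes P B T :: "'a::euclidean_space set"
  assumes "P = convex hull (B \<union> T)" "B \<union> T \<subseteq> {x. x \<bullet> e = r}" "e \<noteq> 0" "aff_dim P = DIM('a)"
  shows False
proof -
  have "P \<subseteq> {x. e \<bullet> x = r}" unfolding assms(1) hyp_comm[symmetric]
    using assms(2) by (intro hull_minimal) (auto simp: hyp_comm convex_hyperplane)
  then have "aff_dim P \<le> aff_dim {x. e \<bullet> x = r}" by (rule aff_dim_subset)
  then show False using assms(3,4) by simp
qed

lemma mix:
  fixes \<beta> \<tau> :: "'a::real_vector"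
  assumes "u + v = 1"
  shows "u *\<^sub>R ((1 - \<alpha>) *\<^sub>R \<beta> + \<alpha> *\<^sub>R \<tau>) + v *\<^sub>R ((1 - \<gamma>) *\<^sub>R \<beta> + \<gamma> *\<^sub>R \<tau>)
     = (1 - (u * \<alpha> + v * \<gamma>)) *\<^sub>R \<beta> + (u * \<alpha> + v * \<gamma>) *\<^sub>R \<tau>"
proof -
  have v: "v = 1 - u" using assms by simp
  show ?thesis unfolding v by (simp add: algebra_simps)
qed

lemma struct:
  fixes P T B :: "'a::euclidean_space set"
  assumes sm: "smooth_polytope P" and pr: "prismatoid P T B" and e: "e \<in> Basis"
    and hh: "0 \<le> h" and Bl: "B \<subseteq> {x. x \<bullet> e = of_int b}" and Tl: "T \<subseteq> {x. x \<bullet> e = of_int (b + h)}"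
  shows "P = convex hull (B \<union> T)" "B face_of P" "convex B" "convex T" "B \<noteq> {}" "T \<noteq> {}"
    "compact B" "compact T" "(of_int b :: real) < of_int (b + h)"
proof -
  have pP: "polytope P" "aff_dim P = DIM('a)"
    using sm unfolding smooth_polytope_def simple_polytope_def by auto
  have TF: "T face_of P" and BF: "B face_of P" using pr unfolding prismatoid_def by blast+
  show hull: "P = convex hull (B \<union> T)" using prismatoid_hull[OF pr] .
  show "B face_of P" by (rule BF)
  have cvP: "convex P" "compact P" using pP polytope_imp_convex polytope_imp_compact by auto
  show "convex B" "convex T" using TF BF face_of_imp_convex by auto
  show "compact B" "compact T" using face_of_imp_compact[OF cvP] TF BF by auto
  have e0: "e \<noteq> 0" using e by auto
  show "B \<noteq> {}"
  proof
    assume "B = {}"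
    then have "B \<union> T \<subseteq> {x. x \<bullet> e = of_int (b + h)}" using Tl by auto
    then show False using nondeg[OF hull _ e0 pP(2)] by blast
  qed
  show "T \<noteq> {}"
  proof
    assume "T = {}"
    then have "B \<union> T \<subseteq> {x. x \<bullet> e = of_int b}" using Bl by auto
    then show False using nondeg[OF hull _ e0 pP(2)] by blast
  qed
  show "(of_int b :: real) < of_int (b + h)"
  proof (rule ccontr)
    assume "\<not> (of_int b :: real) < of_int (b + h)"
    then have "h = 0" using hh by simp
    then have "B \<union> T \<subseteq> {x. x \<bullet> e = of_int b}" using Bl Tl by auto
    then show False using nondeg[OF hull _ e0 pP(2)] by blast
  qed
qed

lemma core:
  fixes P B T P' B' T' :: "'a::euclidean_space set" and b h b' h' k :: int
  assumes P: "P = convex hull (B \<union> T)" and BF: "B face_of P" and cB: "convex B" and cT: "convex T"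
    and ne: "B \<noteq> {}" "T \<noteq> {}"
    and Bl: "B \<subseteq> {x. x \<bullet> e = of_int b}" and Tl: "T \<subseteq> {x. x \<bullet> e = of_int (b + h)}"
    and bc: "(of_int b :: real) < of_int (b + h)"
    and kB: "compact B" and kT: "compact T"
  assumes P': "P' = convex hull (B' \<union> T')" and BF': "B' face_of P'" and cB': "convex B'" and cT': "convex T'"
    and ne': "B' \<noteq> {}" "T' \<noteq> {}"
    and Bl': "B' \<subseteq> {x. x \<bullet> e = of_int b'}" and Tl': "T' \<subseteq> {x. x \<bullet> e = of_int (b' + h')}"
    and bc': "(of_int b' :: real) < of_int (b' + h')"
    and kB': "compact B'" and kT': "compact T'"
  assumes fan: "normal_fan P = normal_fan P'"
    and xy: "x \<in> P" "y \<in> P'" "(x + y) \<bullet> e = of_int k"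
  shows "\<exists>l\<in>{0..h}. \<exists>m\<in>{0..h'}. x + y \<in> {p + q | p q. p \<in> slice e P (b + l) \<and> q \<in> slice e P' (b' + m)}"
proof -
  define bl :: real where "bl = of_int b"
  define bl' :: real where "bl' = of_int b'"
  define H :: real where "H = of_int h"
  define H' :: real where "H' = of_int h'"
  have cl: "(of_int (b + h) :: real) = bl + H" and cl': "(of_int (b' + h') :: real) = bl' + H'"
    unfolding bl_def H_def bl'_def H'_def by simp_all
  have Hp: "H > 0" "H' > 0" using bc bc' unfolding H_def H'_def by simp_all
  have xP: "x \<in> convex hull (B \<union> T)" and yP: "y \<in> convex hull (B' \<union> T')" using xy P P' by auto
  define s where "s = x \<bullet> e - bl"
  define t where "t = y \<bullet> e - bl'"
  have s_rng: "0 \<le> s" "s \<le> H"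
    using decomp(2,3)[OF xP cB cT ne Bl Tl bc] unfolding s_def cl bl_def[symmetric] by auto
  have t_rng: "0 \<le> t" "t \<le> H'"
    using decomp(2,3)[OF yP cB' cT' ne' Bl' Tl' bc'] unfolding t_def cl' bl'_def[symmetric] by auto
  have st: "s + t = of_int (k - b - b')"
    using xy(3) unfolding s_def t_def bl_def bl'_def by (simp add: inner_add_left)
  obtain \<beta> \<tau> where bt: "\<beta> \<in> B" "\<tau> \<in> T" "x = (1 - s / H) *\<^sub>R \<beta> + (s / H) *\<^sub>R \<tau>"
    using decomp(1)[OF xP cB cT ne Bl Tl bc] unfolding cl bl_def[symmetric] s_def[symmetric] by auto
  obtain \<beta>' \<tau>' where bt': "\<beta>' \<in> B'" "\<tau>' \<in> T'" "y = (1 - t / H') *\<^sub>R \<beta>' + (t / H') *\<^sub>R \<tau>'"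
    using decomp(1)[OF yP cB' cT' ne' Bl' Tl' bc'] unfolding cl' bl'_def[symmetric] t_def[symmetric] by auto
  have sl: "slice e P (b + l) = P \<inter> {x. x \<bullet> e = bl + of_int l}" for l
    unfolding slice_def bl_def by simp
  have sl': "slice e P' (b' + m) = P' \<inter> {x. x \<bullet> e = bl' + of_int m}" for m
    unfolding slice_def bl'_def by simp
  define L where "L j = (1 - j / H) *\<^sub>R \<beta> + (j / H) *\<^sub>R \<tau>" for j :: real
  define L' where "L' j = (1 - j / H') *\<^sub>R \<beta>' + (j / H') *\<^sub>R \<tau>'" for j :: real
  have LP: "L j \<in> P" if "0 \<le> j" "j \<le> H" for j
    unfolding L_def P using that Hp by (intro comb_in bt) auto
  have LP': "L' j \<in> P'" if "0 \<le> j" "j \<le> H'" for j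
    unfolding L'_def P' using that Hp by (intro comb_in bt') auto
  have Le: "L j \<bullet> e = bl + j" for j
  proof -
    have "L j \<bullet> e = bl + (j / H) * (bl + H - bl)" unfolding L_def
      by (rule comb_level) (use bt Bl Tl cl bl_def in auto)
    then show ?thesis using Hp by simp
  qed
  have Le': "L' j \<bullet> e = bl' + j" for j
  proof -
    have "L' j \<bullet> e = bl' + (j / H') * (bl' + H' - bl')" unfolding L'_def
      by (rule comb_level) (use bt' Bl' Tl' cl' bl'_def in auto)
    then show ?thesis using Hp by simp
  qed
  define l where "l = \<lfloor>s\<rfloor>"
  show ?thesis
  proof (cases "s = of_int l")
    case True
    define m where "m = k - b - b' - l"
    have tm: "t = of_int m" using st True unfolding m_def by simp
    have l: "0 \<le> l" "l \<le> h" using s_rng True unfolding H_def by simp_all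
    have m: "0 \<le> m" "m \<le> h'" using t_rng tm unfolding H'_def by simp_all
    have "x \<in> slice e P (b + l)" unfolding sl using xy True s_def by simp
    moreover have "y \<in> slice e P' (b' + m)" unfolding sl' using xy tm t_def by simp
    ultimately show ?thesis using l m by (intro bexI[where x=l] bexI[where x=m]) auto
  next
    case False
    have fl: "of_int l \<le> s" "s < of_int l + 1" unfolding l_def using floor_correct[of s] by auto
    then have l1: "of_int l < s" using False by simp
    have l0: "0 \<le> l" unfolding l_def using s_rng by simp
    have "of_int l < H" using l1 s_rng by simp
    then have lh: "l + 1 \<le> h" unfolding H_def by simp
    define m where "m = k - b - b' - l - 1"
    have tm: "of_int m < t" "t < of_int m + 1" using st fl l1 unfolding m_def by (simp_all add: algebra_simps)
    have m0: "0 \<le> m" using tm t_rng by simp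
    have "of_int m < H'" using tm t_rng by simp
    then have mh: "m + 1 \<le> h'" unfolding H'_def by simp
    define lam where "lam = s - of_int l"
    have lam: "0 < lam" "lam < 1" using l1 fl unfolding lam_def by simp_all
    have tlam: "t = of_int m + 1 - lam" using st unfolding lam_def m_def by simp
    define p where "p = L (of_int l)"
    define q where "q = L (of_int l + 1)"
    define p' where "p' = L' (of_int m)"
    define q' where "q' = L' (of_int m + 1)"
    have xpq: "x = (1 - lam) *\<^sub>R p + lam *\<^sub>R q"
    proof -
      have "(1 - lam) *\<^sub>R p + lam *\<^sub>R q
          = (1 - ((1 - lam) * (of_int l / H) + lam * ((of_int l + 1) / H))) *\<^sub>R \<beta>
            + ((1 - lam) * (of_int l / H) + lam * ((of_int l + 1) / H)) *\<^sub>R \<tau>"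
        unfolding p_def q_def L_def by (rule mix) simp
      moreover have "(1 - lam) * (of_int l / H) + lam * ((of_int l + 1) / H) = s / H"
        using Hp unfolding lam_def by (simp add: field_simps)
      ultimately show ?thesis using bt(3) by simp
    qed
    have ypq: "y = lam *\<^sub>R p' + (1 - lam) *\<^sub>R q'"
    proof -
      have "lam *\<^sub>R p' + (1 - lam) *\<^sub>R q'
          = (1 - (lam * (of_int m / H') + (1 - lam) * ((of_int m + 1) / H'))) *\<^sub>R \<beta>'
            + (lam * (of_int m / H') + (1 - lam) * ((of_int m + 1) / H')) *\<^sub>R \<tau>'"
        unfolding p'_def q'_def L'_def by (rule mix) simp
      moreover have "lam * (of_int m / H') + (1 - lam) * ((of_int m + 1) / H') = t / H'"
        using Hp unfolding tlam by (simp add: field_simps)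
      ultimately show ?thesis using bt'(3) by simp
    qed
    have lH: "of_int l + 1 \<le> H" using lh unfolding H_def by linarith
    have mH: "of_int m + 1 \<le> H'" using mh unfolding H'_def by linarith
    have pP: "p \<in> P" "p \<bullet> e = bl + of_int l" unfolding p_def using LP[of "of_int l"] Le l0 lH by auto
    have qP: "q \<in> P" "q \<bullet> e = bl + of_int l + 1" unfolding q_def using LP[of "of_int l + 1"] Le l0 lH by auto
    have pP': "p' \<in> P'" "p' \<bullet> e = bl' + of_int m" unfolding p'_def using LP'[of "of_int m"] Le' m0 mH by auto
    have qP': "q' \<in> P'" "q' \<bullet> e = bl' + of_int m + 1" unfolding q'_def using LP'[of "of_int m + 1"] Le' m0 mH by auto
    define Sm where "Sm = {x + y | x y. x \<in> P \<inter> {x. x \<bullet> e = bl + of_int l} \<and> y \<in> P' \<inter> {x. x \<bullet> e = bl' + of_int m + 1}}"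
    have Bl2: "B \<subseteq> {x. x \<bullet> e = bl}" and Tl2: "T \<subseteq> {x. x \<bullet> e = bl + H}"
      using Bl Tl cl unfolding bl_def by auto
    have Bl2': "B' \<subseteq> {x. x \<bullet> e = bl'}" and Tl2': "T' \<subseteq> {x. x \<bullet> e = bl' + H'}"
      using Bl' Tl' cl' unfolding bl'_def by auto
    have bc2: "bl < bl + H" "bl' < bl' + H'" using Hp by auto
    have "q + p' \<in> {x + y | x y. x \<in> P \<inter> {x. x \<bullet> e = (bl + of_int l + 1) - 1} \<and> y \<in> P' \<inter> {x. x \<bullet> e = (bl' + of_int m) + 1}}"
      by (rule cont[OF P BF cB cT ne Bl2 Tl2 bc2(1) kB kT P' BF' cB' cT' ne' Bl2' Tl2' bc2(2) kB' kT' fan qP(1,2) _ pP'(1,2)])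
        (use l0 mH in auto)
    then have qp: "q + p' \<in> Sm" unfolding Sm_def by (simp add: add.assoc)
    have pq: "p + q' \<in> Sm" unfolding Sm_def using pP qP' by (auto simp: add.assoc)
    have cvP: "convex P" "convex P'" unfolding P P' by simp_all
    have cS: "convex (P \<inter> {x. x \<bullet> e = bl + of_int l})" "convex (P' \<inter> {x. x \<bullet> e = bl' + of_int m + 1})"
      unfolding hyp_comm using cvP by (simp_all add: convex_Int convex_hyperplane)
    have "Sm = (\<Union>x\<in>P \<inter> {x. x \<bullet> e = bl + of_int l}. \<Union>y\<in>P' \<inter> {x. x \<bullet> e = bl' + of_int m + 1}. {x + y})"
      unfolding Sm_def by auto
    then have cSm: "convex Sm" using convex_sums[OF cS] by simp
    have "x + y = (1 - lam) *\<^sub>R (p + q') + lam *\<^sub>R (q + p')"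
      unfolding xpq ypq by (simp add: algebra_simps)
    then have "x + y \<in> Sm" using convexD[OF cSm pq qp, of "1 - lam" lam] lam by simp
    then have "x + y \<in> {p + q | p q. p \<in> slice e P (b + l) \<and> q \<in> slice e P' (b' + (m + 1))}"
      unfolding Sm_def sl sl' by (simp add: add.assoc)
    moreover have "l \<in> {0..h}" "m + 1 \<in> {0..h'}" using l0 lh m0 mh by auto
    ultimately show ?thesis by (intro bexI[where x=l] bexI[where x="m + 1"]) auto
  qed
qed

theorem lemma4p4:
  fixes P P' T B T' B' :: "'a::euclidean_space set" and e :: 'a and b h b' h' :: int
  assumes "e \<in> Basis"
    and "smooth_polytope P" and "smooth_polytope P'"
    and "minkowski_equivalent P P'"
    and "prismatoid P T B" and "prismatoid P' T' B'"
    and "0 \<le> h" and "B \<subseteq> {x. x \<bullet> e = of_int b}" and "T \<subseteq> {x. x \<bullet> e = of_int (b + h)}"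
    and "0 \<le> h'" and "B' \<subseteq> {x. x \<bullet> e = of_int b'}" and "T' \<subseteq> {x. x \<bullet> e = of_int (b' + h')}"
    and "\<forall>l\<in>{0..h}. \<forall>m\<in>{0..h'}. IDP_pair (slice e P (b + l)) (slice e P' (b' + m))"
  shows "IDP_pair P P'"
proof -
  note S = struct[OF assms(2) assms(5) assms(1) assms(7) assms(8) assms(9)]
  note S' = struct[OF assms(3) assms(6) assms(1) assms(10) assms(11) assms(12)]
  have fan: "normal_fan P = normal_fan P'" using assms(4) unfolding minkowski_equivalent_def .
  show ?thesis unfolding IDP_pair_def
  proof (intro ballI)
    fix z assume z: "z \<in> lattice \<inter> {x + y |x y. x \<in> P \<and> y \<in> P'}"
    then obtain x y where xy: "z = x + y" "x \<in> P" "y \<in> P'" by blast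
    have zl: "z \<in> lattice" using z by blast
    have "z \<bullet> e \<in> \<int>" using zl assms(1) unfolding lattice_def by blast
    then obtain k where k: "z \<bullet> e = of_int k" by (elim Ints_cases) auto
    have xyk: "(x + y) \<bullet> e = of_int k" using k xy(1) by simp
    obtain l m where lm: "l \<in> {0..h}" "m \<in> {0..h'}"
      and zs: "x + y \<in> {p + q | p q. p \<in> slice e P (b + l) \<and> q \<in> slice e P' (b' + m)}"
      using core[OF S(1-6) assms(8,9) S(9) S(7,8) S'(1-6) assms(11,12) S'(9) S'(7,8) fan xy(2,3) xyk]
      by blast
    have "IDP_pair (slice e P (b + l)) (slice e P' (b' + m))" using assms(13) lm by blast
    then obtain x' y' where x': "x' \<in> slice e P (b + l) \<inter> lattice" and y': "y' \<in> slice e P' (b' + m) \<inter> lattice"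
      and zxy: "z = x' + y'"
      unfolding IDP_pair_def using zl zs xy(1) by blast
    have "x' \<in> P \<inter> lattice" "y' \<in> P' \<inter> lattice" using x' y' unfolding slice_def by auto
    then show "\<exists>x\<in>P \<inter> lattice. \<exists>y\<in>P' \<inter> lattice. z = x + y" using zxy by blast
  qed
qed

end
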